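(* Let $\beta>0$, $\tilde\lambda\in(0,1]$, $\mathcal{L}\ge 0$, $x\ge 0$, $y\le 0$, $z\ge 0$. For $\Delta>y$ let $p^D(\Delta)=\frac{x}{\Delta-y}$, and say that $\Delta$ satisfies the leverage constraint if $\Delta>y$ and $$\beta(\mathcal{L}+\Delta)\le \tilde\lambda\Big(z+\Delta\,p^D(\Delta)\Big).$$ Consider the quadratic polynomial in $\Delta$ $$-\beta \Delta^2 + \Delta\Big( \tilde \lambda (z+x) - \beta(\mathcal{L} - y)\Big) - \tilde\lambda zy + \beta\mathcal{L} y .$$ If its roots are real, denote them $\Delta_{\min}\le\Delta_{\max}$; then the set of $\Delta$ satisfying the leverage constraint is $[\Delta_{\min},\Delta_{\max}]\cap(y,\infty)$. If its roots are not real, then no $\Delta$ satisfies the leverage constraint.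
   Context: Single period $t$ of a stablecoin market model. A speculator owes $\mathcal{L}=\mathcal{L}_{t-1}$ stablecoins and holds Ether worth $z=n_{t-1}p^E_t$ dollars; $x=w^D\bar n_{t-1}p^E_t\ge0$ is the new dollar stablecoin demand from the stablecoin holder and $y=w^D\bar m_{t-1}-\mathcal{L}_{t-1}\le 0$ (so $|y|$ is the "free supply"). The speculator changes the stablecoin supply by $\Delta$ (new supply $\mathcal{L}+\Delta$), and for $\Delta>y$ the stablecoin market clears at dollar price $p^D(\Delta)=x/(\Delta-y)$; the speculator's assets after the trade are worth $z+\Delta p^D(\Delta)$. Its leverage is $\lambda=\beta\cdot\text{liabilities}/\text{assets}=\beta(\mathcal{L}+\Delta)/(z+\Delta p^D(\Delta))$, where $\beta$ is the collateral liquidation threshold, and the leverage constraint is $\lambda\le\tilde\lambda$ (the case $\tilde\lambda=1$ being the protocol's liquidation constraint). *)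

theory Defs
  imports Complex_Main
begin

text \<open>Stablecoin dollar price after a supply change d (meaningful for d > y).\<close>
definition pD :: "real \<Rightarrow> real \<Rightarrow> real \<Rightarrow> real" where
  "pD x y d = x / (d - y)"

definition lev_ok :: "real \<Rightarrow> real \<Rightarrow> real \<Rightarrow> real \<Rightarrow> real \<Rightarrow> real \<Rightarrow> real \<Rightarrow> bool" where
  "lev_ok beta lt L x y z d \<longleftrightarrow> d > y \<and> beta * (L + d) \<le> lt * (z + d * pD x y d)"

definition levq :: "real \<Rightarrow> real \<Rightarrow> real \<Rightarrow> real \<Rightarrow> real \<Rightarrow> real \<Rightarrow> real \<Rightarrow> real" where
  "levq beta lt L x y z d = - beta * d^2 + d * (lt * (z + x) - beta * (L - y)) - lt * z * y + beta * L * y"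

end

theory Submission
  imports Defs
begin

lemma lev_iff:
  assumes "beta > 0" "0 < lt" "d > y"
  shows "lev_ok beta lt L x y z d \<longleftrightarrow> d > y \<and> levq beta lt L x y z d \<ge> 0"
proof -
  have p: "d - y > 0" using assms by simp
  have "beta * (L + d) \<le> lt * (z + d * pD x y d) \<longleftrightarrow>
        beta * (L + d) * (d - y) \<le> lt * (z + d * pD x y d) * (d - y)"
    using p by (simp add: mult_le_cancel_right)
  also have "lt * (z + d * pD x y d) * (d - y) = lt * (z * (d - y) + d * x)"
    using p by (simp add: pD_def field_simps)
  also have "beta * (L + d) * (d - y) \<le> lt * (z * (d - y) + d * x) \<longleftrightarrow> levq beta lt L x y z d \<ge> 0"
    unfolding levq_def by (simp add: power2_eq_square algebra_simps)
  finally show ?thesis using assms unfolding lev_ok_def by simp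
qed

theorem proposition3p1:
  fixes beta lt L x y z :: real
  assumes "beta > 0" and "0 < lt" and "lt \<le> 1" and "L \<ge> 0" and "x \<ge> 0" and "y \<le> 0" and "z \<ge> 0"
  shows "(\<forall>dmin dmax. dmin \<le> dmax \<and> {d. levq beta lt L x y z d = 0} = {dmin, dmax} \<longrightarrow>
            {d. lev_ok beta lt L x y z d} = {dmin..dmax} \<inter> {y<..})
       \<and> ({d. levq beta lt L x y z d = 0} = {} \<longrightarrow> {d. lev_ok beta lt L x y z d} = {})"
proof -
  define b where "b = lt * (z + x) - beta * (L - y)"
  define c where "c = - lt * z * y + beta * L * y"
  define h where "h = b / (2 * beta)"
  define D where "D = b^2 + 4 * beta * c"
  have id: "levq beta lt L x y z d = - beta * (d - h)^2 + D / (4 * beta)" for d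
    using assms(1) unfolding levq_def b_def c_def h_def D_def
    by (simp add: field_simps power2_eq_square)
  have lev: "lev_ok beta lt L x y z d \<longleftrightarrow> d > y \<and> levq beta lt L x y z d \<ge> 0" for d
    using lev_iff[OF assms(1,2)] unfolding lev_ok_def by blast
  show ?thesis
  proof (cases "D \<ge> 0")
    case True
    define s where "s = sqrt D / (2 * beta)"
    have s0: "s \<ge> 0" using True assms(1) by (simp add: s_def)
    have ss: "D / (4 * beta) = beta * s^2" using True assms(1)
      by (simp add: s_def power_divide field_simps power2_eq_square)
    have id2: "levq beta lt L x y z d = beta * (s^2 - (d - h)^2)" for d
      unfolding id ss by (simp add: algebra_simps)
    have roots: "{d. levq beta lt L x y z d = 0} = {h - s, h + s}"
    proof -
      have "levq beta lt L x y z d = 0 \<longleftrightarrow> (d - h)^2 = s^2" for d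
      proof -
          have "beta * (s^2 - (d - h)^2) = 0 \<longleftrightarrow> s^2 - (d - h)^2 = 0" using assms(1) by simp
          thus ?thesis using id2[of d] by linarith
        qed
      also have "(d - h)^2 = s^2 \<longleftrightarrow> d = h - s \<or> d = h + s" for d
        using s0 by (auto simp: power2_eq_iff)
      finally show ?thesis by auto
    qed
    have ge: "levq beta lt L x y z d \<ge> 0 \<longleftrightarrow> d \<in> {h - s..h + s}" for d
    proof -
      have "levq beta lt L x y z d \<ge> 0 \<longleftrightarrow> (d - h)^2 \<le> s^2"
        using id2 assms(1) by (simp add: zero_le_mult_iff)
      also have "\<dots> \<longleftrightarrow> \<bar>d - h\<bar> \<le> s" using s0
        using abs_le_square_iff[of "d - h" s] by simp
      finally show ?thesis by auto
    qed
    show ?thesis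
    proof (intro conjI allI impI)
      fix dmin dmax
      assume a: "dmin \<le> dmax \<and> {d. levq beta lt L x y z d = 0} = {dmin, dmax}"
      hence "{h - s, h + s} = {dmin, dmax}" using roots by simp
      hence "dmin = h - s \<and> dmax = h + s"
      proof -
        assume e: "{h - s, h + s} = {dmin, dmax}"
        have "h - s \<in> {dmin, dmax}" "h + s \<in> {dmin, dmax}" "dmin \<in> {h - s, h + s}" "dmax \<in> {h - s, h + s}"
          using e by blast+
        thus ?thesis using a s0 by auto
      qed
      hence "lev_ok beta lt L x y z d \<longleftrightarrow> d \<in> {dmin..dmax} \<inter> {y<..}" for d
        using ge[of d] lev[of d] by (simp only: Int_iff greaterThan_iff) blast
      thus "{d. lev_ok beta lt L x y z d} = {dmin..dmax} \<inter> {y<..}"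
        by blast
    next
      assume "{d. levq beta lt L x y z d = 0} = {}"
      thus "{d. lev_ok beta lt L x y z d} = {}" using roots by simp
    qed
  next
    case False
    have "levq beta lt L x y z d < 0" for d
    proof -
      have "D / (4 * beta) < 0" using False assms(1) by (simp add: divide_neg_pos)
      moreover have "beta * (d - h)^2 \<ge> 0" using assms(1) by simp
      ultimately show ?thesis using id[of d] by linarith
    qed
    hence "{d. lev_ok beta lt L x y z d} = {}" using lev by (auto simp: not_le)
    moreover have "{d. levq beta lt L x y z d = 0} \<noteq> {dmin, dmax}" for dmin dmax
    proof
      assume "{d. levq beta lt L x y z d = 0} = {dmin, dmax}"
      hence "levq beta lt L x y z dmin = 0" by blast
      thus False using \<open>\<And>d. levq beta lt L x y z d < 0\<close>[of dmin] by simp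
    qed
    ultimately show ?thesis by auto
  qed
qed

end
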